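(* Let $X$ be a topological vector space and let $\varphi: X\to\overline{\mathbb{R}}$ be continuous and linear. Then $\varphi$ is finite-valued, i.e. $\varphi(x)\in\mathbb{R}$ for all $x\in X$.
   Context: $\overline{\mathbb{R}}=\mathbb{R}\cup\{-\infty,+\infty\}$ with the order topology (a neighborhood base of $+\infty$ is $\{\{y:y>a\}:a\in\mathbb{R}\}$, of $-\infty$ is $\{\{y:y<a\}:a\in\mathbb{R}\}$). Continuity of $\varphi:X\to\overline{\mathbb{R}}$ is ordinary continuity into this space. $\operatorname{epi}\varphi=\{(x,t)\in X\times\mathbb{R}:\varphi(x)\le t\}$, $\operatorname{hypo}\varphi=\{(x,t)\in X\times\mathbb{R}:\varphi(x)\ge t\}$. A function $\varphi:X\to\overline{\mathbb{R}}$ is called linear if $\operatorname{epi}\varphi$ and $\operatorname{hypo}\varphi$ are convex sets and $\varphi(0)=0$. *)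

theory Defs
  imports "HOL-Analysis.Analysis" "HOL-Library.Extended_Real"
begin

definition tvs :: "'a::{real_vector, topological_space} itself \<Rightarrow> bool" where
  "tvs _ \<longleftrightarrow>
     continuous_on (UNIV :: ('a \<times> 'a) set) (\<lambda>p. fst p + snd p) \<and>
     continuous_on (UNIV :: (real \<times> 'a) set) (\<lambda>p. fst p *\<^sub>R snd p)"

definition epi :: "('a \<Rightarrow> ereal) \<Rightarrow> ('a \<times> real) set" where
  "epi \<phi> = {(x, t). \<phi> x \<le> ereal t}"

definition hypo :: "('a \<Rightarrow> ereal) \<Rightarrow> ('a \<times> real) set" where
  "hypo \<phi> = {(x, t). \<phi> x \<ge> ereal t}"

definition ext_linear :: "('a::real_vector \<Rightarrow> ereal) \<Rightarrow> bool" where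
  "ext_linear \<phi> \<longleftrightarrow> convex (epi \<phi>) \<and> convex (hypo \<phi>) \<and> \<phi> 0 = 0"

end

theory Submission
  imports Defs
begin

lemma scal_cont:
  fixes x :: "'a::{real_vector, topological_space}"
  assumes "tvs TYPE('a)"
  shows "continuous_on UNIV (\<lambda>l::real. l *\<^sub>R x)"
proof -
  have c: "continuous_on (UNIV :: (real \<times> 'a) set) (\<lambda>p. fst p *\<^sub>R snd p)"
    using assms unfolding tvs_def by blast
  have "continuous_on UNIV (\<lambda>l::real. (l, x))"
    by (intro continuous_intros)
  from continuous_on_compose2[OF c this] show ?thesis by simp
qed

lemma not_inf_side:
  fixes \<phi> :: "'a::{real_vector, topological_space} \<Rightarrow> ereal"
  assumes "tvs TYPE('a)" and "continuous_on UNIV \<phi>" and "\<phi> 0 = 0"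
    and c: "\<forall>l. 0 < l \<and> l < 1 \<longrightarrow> \<phi> (l *\<^sub>R x) = v" and v: "v \<noteq> 0"
  shows False
proof -
  define g where "g = (\<lambda>l::real. \<phi> (l *\<^sub>R x))"
  have "continuous_on UNIV g"
    unfolding g_def using continuous_on_compose2[OF assms(2) scal_cont[OF assms(1)]] by simp
  hence "(g \<longlongrightarrow> g 0) (at 0)" by (simp add: continuous_on_def)
  hence "(g \<longlongrightarrow> g 0) (at_right 0)" using filterlim_at_split by blast
  moreover have "g 0 = 0" using assms(3) unfolding g_def by simp
  ultimately have "(g \<longlongrightarrow> 0) (at_right 0)" by simp
  moreover have "eventually (\<lambda>l. g l = v) (at_right 0)"
    unfolding g_def eventually_at_right_field using c by (intro exI[of _ 1]) auto
  hence "(g \<longlongrightarrow> v) (at_right 0)" using tendsto_eventually by blast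
  ultimately have "v = 0" using tendsto_unique[OF trivial_limit_at_right_real] by blast
  with v show False by simp
qed

theorem mainTheorem11:
  fixes \<phi> :: "'a::{real_vector, topological_space} \<Rightarrow> ereal"
  assumes "tvs TYPE('a)"
    and "continuous_on UNIV \<phi>"
    and "ext_linear \<phi>"
  shows "\<forall>x. \<phi> x \<noteq> \<infinity> \<and> \<phi> x \<noteq> -\<infinity>"
proof (intro allI)
  fix x
  have ce: "convex (epi \<phi>)" and ch: "convex (hypo \<phi>)" and z: "\<phi> 0 = 0"
    using assms(3) unfolding ext_linear_def by auto
  have A: False if "\<phi> x = \<infinity>"
  proof -
    have "\<forall>l. 0 < l \<and> l < 1 \<longrightarrow> \<phi> (l *\<^sub>R x) = \<infinity>"
    proof (intro allI impI)
      fix l :: real assume l: "0 < l \<and> l < 1"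
      have "\<forall>s. ereal s \<le> \<phi> (l *\<^sub>R x)"
      proof
        fix s
        have h1: "(x, s / l) \<in> hypo \<phi>" using that by (simp add: hypo_def)
        have h0: "(0, 0) \<in> hypo \<phi>" using z by (simp add: hypo_def)
        have "l *\<^sub>R (x, s / l) + (1 - l) *\<^sub>R (0, 0) \<in> hypo \<phi>"
          proof -
          have u: "0 \<le> l" "0 \<le> 1 - l" "l + (1 - l) = 1" using l by auto
          show ?thesis by (rule convexD[OF ch h1 h0 u])
        qed
        moreover have "l *\<^sub>R (x, s / l) + (1 - l) *\<^sub>R (0::'a, 0::real) = (l *\<^sub>R x, s)"
          using l by (simp add: scaleR_prod_def)
        ultimately have "(l *\<^sub>R x, s) \<in> hypo \<phi>" by metis
        thus "ereal s \<le> \<phi> (l *\<^sub>R x)" unfolding hypo_def by blast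
      qed
      thus "\<phi> (l *\<^sub>R x) = \<infinity>" by (intro ereal_top) blast
    qed
    from not_inf_side[OF assms(1,2) z this] show False by simp
  qed
  have B: False if "\<phi> x = -\<infinity>"
  proof -
    have "\<forall>l. 0 < l \<and> l < 1 \<longrightarrow> \<phi> (l *\<^sub>R x) = -\<infinity>"
    proof (intro allI impI)
      fix l :: real assume l: "0 < l \<and> l < 1"
      have "\<forall>s. \<phi> (l *\<^sub>R x) \<le> ereal s"
      proof
        fix s
        have h1: "(x, s / l) \<in> epi \<phi>" using that by (simp add: epi_def)
        have h0: "(0, 0) \<in> epi \<phi>" using z by (simp add: epi_def)
        have "l *\<^sub>R (x, s / l) + (1 - l) *\<^sub>R (0, 0) \<in> epi \<phi>"
          proof -
          have u: "0 \<le> l" "0 \<le> 1 - l" "l + (1 - l) = 1" using l by auto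
          show ?thesis by (rule convexD[OF ce h1 h0 u])
        qed
        moreover have "l *\<^sub>R (x, s / l) + (1 - l) *\<^sub>R (0::'a, 0::real) = (l *\<^sub>R x, s)"
          using l by (simp add: scaleR_prod_def)
        ultimately have "(l *\<^sub>R x, s) \<in> epi \<phi>" by metis
        thus "\<phi> (l *\<^sub>R x) \<le> ereal s" unfolding epi_def by blast
      qed
      thus "\<phi> (l *\<^sub>R x) = -\<infinity>" by (intro ereal_bot) blast
    qed
    from not_inf_side[OF assms(1,2) z this] show False by simp
  qed
  show "\<phi> x \<noteq> \<infinity> \<and> \<phi> x \<noteq> -\<infinity>" using A B by blast
qed
end
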